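(* Let $(\mathcal{P},\cdot)$ be an admissible Poisson algebra and let $e_1,e_2$ be non-zero idempotents with $e_1\cdot e_2=e_2\cdot e_1=0$. For $k=1,2$ and $i\in\{0,1\}$ put $\mathcal{P}^k_{i,i}=\{x\in\mathcal{P}: e_k\cdot x=x\cdot e_k=ix\}$. Then $\mathcal{P}$ is the direct sum of subalgebras $$\mathcal{P}=\big(\mathcal{P}^1_{0,0}\cap\mathcal{P}^2_{0,0}\big)\oplus\mathcal{P}^1_{1,1}\oplus\mathcal{P}^2_{1,1}.$$
   Context: $\mathbb{K}$ is a field of characteristic different from $2$ and $3$. Associator: $A(X,Y,Z)=(X\cdot Y)\cdot Z-X\cdot(Y\cdot Z)$. An admissible Poisson algebra is a $\mathbb{K}$-vector space $\mathcal{P}$ with a bilinear product $\cdot$ satisfying $3A(X,Y,Z)=(X\cdot Z)\cdot Y+(Y\cdot Z)\cdot X-(Y\cdot X)\cdot Z-(Z\cdot X)\cdot Y$ for all $X,Y,Z$. An idempotent is $e$ with $e\cdot e=e$. *)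

theory Defs
  imports Main "HOL.Vector_Spaces"
begin

definition bilinear_product :: "('k::field \<Rightarrow> 'v::ab_group_add \<Rightarrow> 'v) \<Rightarrow> ('v \<Rightarrow> 'v \<Rightarrow> 'v) \<Rightarrow> bool" where
  "bilinear_product scale mult \<longleftrightarrow>
     (\<forall>x y z. mult (x + y) z = mult x z + mult y z) \<and>
     (\<forall>x y z. mult x (y + z) = mult x y + mult x z) \<and>
     (\<forall>c x y. mult (scale c x) y = scale c (mult x y)) \<and>
     (\<forall>c x y. mult x (scale c y) = scale c (mult x y))"

definition associator :: "('v::ab_group_add \<Rightarrow> 'v \<Rightarrow> 'v) \<Rightarrow> 'v \<Rightarrow> 'v \<Rightarrow> 'v \<Rightarrow> 'v" where
  "associator mult x y z = mult (mult x y) z - mult x (mult y z)"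

definition admissible_poisson :: "('k::field \<Rightarrow> 'v::ab_group_add \<Rightarrow> 'v) \<Rightarrow> ('v \<Rightarrow> 'v \<Rightarrow> 'v) \<Rightarrow> bool" where
  "admissible_poisson scale mult \<longleftrightarrow>
     vector_space scale \<and> bilinear_product scale mult \<and>
     (\<forall>x y z. scale 3 (associator mult x y z) =
        mult (mult x z) y + mult (mult y z) x - mult (mult y x) z - mult (mult z x) y)"

definition peirce_space :: "('k::field \<Rightarrow> 'v::ab_group_add \<Rightarrow> 'v) \<Rightarrow> ('v \<Rightarrow> 'v \<Rightarrow> 'v) \<Rightarrow> 'v \<Rightarrow> 'k \<Rightarrow> 'v set" where
  "peirce_space scale mult e i = {x. mult e x = scale i x \<and> mult x e = scale i x}"

definition subalgebra :: "('k::field \<Rightarrow> 'v::ab_group_add \<Rightarrow> 'v) \<Rightarrow> ('v \<Rightarrow> 'v \<Rightarrow> 'v) \<Rightarrow> 'v set \<Rightarrow> bool" where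
  "subalgebra scale mult S \<longleftrightarrow> module.subspace scale S \<and> (\<forall>x\<in>S. \<forall>y\<in>S. mult x y \<in> S)"

definition direct_sum3 :: "'v::ab_group_add set \<Rightarrow> 'v set \<Rightarrow> 'v set \<Rightarrow> bool" where
  "direct_sum3 A B C \<longleftrightarrow> (\<forall>x. \<exists>!(a, b, c). a \<in> A \<and> b \<in> B \<and> c \<in> C \<and> x = a + b + c)"

end

theory Submission
  imports Defs
begin

locale apa =
  fixes scale :: "'k::field \<Rightarrow> 'v::ab_group_add \<Rightarrow> 'v"
    and mult :: "'v \<Rightarrow> 'v \<Rightarrow> 'v"
  assumes adm: "admissible_poisson scale mult"
    and c2: "(2::'k) \<noteq> 0" and c3: "(3::'k) \<noteq> 0"
begin

lemma vs: "vector_space scale" using adm unfolding admissible_poisson_def by blast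

lemma ladd: "mult (x + y) z = mult x z + mult y z"
  and radd: "mult x (y + z) = mult x y + mult x z"
  and lsc: "mult (scale c x) y = scale c (mult x y)"
  and rsc: "mult x (scale c y) = scale c (mult x y)"
  using adm unfolding admissible_poisson_def bilinear_product_def by blast+

lemma lzero[simp]: "mult 0 z = 0"
  using ladd[of 0 0 z] by simp
lemma rzero[simp]: "mult z 0 = 0"
  using radd[of z 0 0] by simp
lemma ldiff: "mult (x - y) z = mult x z - mult y z"
  using ladd[of "x - y" y z] by (simp add: algebra_simps)
lemma rdiff: "mult z (x - y) = mult z x - mult z y"
  using radd[of z "x - y" y] by (simp add: algebra_simps)
lemma lminus: "mult (- x) z = - mult x z"
  using ldiff[of 0 x z] by simp
lemma rminus: "mult z (- x) = - mult z x"
  using rdiff[of z 0 x] by simp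

lemmas bil = ladd radd ldiff rdiff lminus rminus

lemma three: "scale 3 w = w + w + w"
proof -
  interpret vector_space scale by (rule vs)
  have "(3::'k) = 1 + 1 + 1" by simp
  then show ?thesis by (simp only: scale_left_distrib scale_one)
qed

lemma cancel2: fixes w :: 'v assumes h: "w + w = 0" shows "w = 0"
proof -
  interpret vector_space scale by (rule vs)
  note h
  moreover have "scale 2 w = scale (1+1) w" by simp
  moreover have "scale (1+1) w = w + w" by (simp only: scale_left_distrib scale_one)
  ultimately have "scale 2 w = 0" by simp
  then show "w = 0" using c2 by simp
qed

lemma cancel3: fixes w :: 'v assumes h: "w + w + w = 0" shows "w = 0"
proof -
  interpret vector_space scale by (rule vs)
  from h show "w = 0" using c3 three[of w] by simp
qed

definition T :: "'v \<Rightarrow> 'v \<Rightarrow> 'v \<Rightarrow> 'v" where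
  "T x y z = (let P = mult (mult x y) z - mult x (mult y z) in P + P + P)
     - (mult (mult x z) y + mult (mult y z) x - mult (mult y x) z - mult (mult z x) y)"

lemma T0: "T x y z = 0"
proof -
  have "scale 3 (associator mult x y z) =
        mult (mult x z) y + mult (mult y z) x - mult (mult y x) z - mult (mult z x) y"
    using adm unfolding admissible_poisson_def by blast
  then show ?thesis unfolding T_def Let_def three associator_def by simp
qed


lemma cent:
  assumes ee: "mult e e = e"
  shows "mult e a = mult a e"
proof -
  define D where "D = mult e a - mult a e"
  define X where "X = D - mult e D - mult D e"
  have "X + X + X = T e e a - T e a e + T a e e"
    unfolding X_def D_def T_def Let_def by (simp only: bil ee) simp
  hence "X + X + X = 0" by (simp add: T0)
  then have hX: "X = 0" by (rule cancel3)
  define C where "C = (\<lambda>u. mult e u + mult u e)"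
  have hY: "C (C y) = C y + C y" for y
  proof -
    define Y where "Y = C (C y) - C y - C y"
    have "Y + Y + Y = - T e y e + T y e e + T y e e - T e e y"
      unfolding Y_def C_def T_def Let_def by (simp only: bil ee) simp
    hence "Y + Y + Y = 0" by (simp add: T0)
  then have "Y = 0" by (rule cancel3)
    thus ?thesis unfolding Y_def by (simp add: algebra_simps)
  qed
  have CD: "C D = D" using hX unfolding X_def C_def by (simp add: algebra_simps)
  have "D = D + D" using hY[of D] unfolding CD .
  hence "D = 0" by simp
  thus ?thesis unfolding D_def by simp
qed

lemma CC:
  assumes ee: "mult e e = e"
  shows "mult e (mult e y + mult y e) + mult (mult e y + mult y e) e
         = (mult e y + mult y e) + (mult e y + mult y e)"
proof -
  define C where "C = (\<lambda>u. mult e u + mult u e)"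
  define Y where "Y = C (C y) - C y - C y"
  have "Y + Y + Y = - T e y e + T y e e + T y e e - T e e y"
    unfolding Y_def C_def T_def Let_def by (simp only: bil ee) simp
  hence "Y + Y + Y = 0" by (simp add: T0)
  then have "Y = 0" by (rule cancel3)
  thus ?thesis unfolding Y_def C_def by (simp add: algebra_simps)
qed

lemma idem2:
  assumes ee: "mult e e = e"
  shows "mult e (mult e a) = mult e a"
proof -
  define W where "W = mult e (mult e a) - mult e a"
  have c1: "mult a e = mult e a" using cent[OF ee] by simp
  have c2': "mult (mult e a) e = mult e (mult e a)" using cent[OF ee] by simp
  have "(W + W) + (W + W) = 0"
    using CC[OF ee, of a] unfolding W_def c1 by (simp only: bil c2') (simp add: algebra_simps)
  hence "W = 0" using cancel2 by blast
  thus ?thesis unfolding W_def by simp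
qed

lemma sub1:
  assumes ee: "mult e e = e" and x1: "mult e x = x" "mult x e = x"
    and y1: "mult e y = y" "mult y e = y"
  shows "mult e (mult x y) = mult x y"
proof -
  define Z where "Z = mult e (mult x y) - mult x y"
  define Z4 where "Z4 = (Z + Z) + (Z + Z)"
  have "Z4 + Z4 + Z4 = - T e x y - T e x y - T e x y - T e x y + T x e y - T x y e"
    unfolding Z4_def Z_def T_def Let_def by (simp only: bil ee x1 y1) simp
  hence "Z4 + Z4 + Z4 = 0" by (simp add: T0)
  then have "Z4 = 0" by (rule cancel3)
  hence "Z = 0" unfolding Z4_def using cancel2 by blast
  thus ?thesis unfolding Z_def by simp
qed

lemma sub0:
  assumes ee: "mult e e = e" and x1: "mult e x = 0" "mult x e = 0"
    and y1: "mult e y = 0" "mult y e = 0"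
  shows "mult e (mult x y) = 0"
proof -
  define Z where "Z = mult e (mult x y)"
  define Z4 where "Z4 = (Z + Z) + (Z + Z)"
  have "Z4 + Z4 + Z4 = - T e x y - T e x y - T e x y - T e x y + T x e y - T x y e"
    unfolding Z4_def Z_def T_def Let_def by (simp only: bil ee x1 y1) simp
  hence "Z4 + Z4 + Z4 = 0" by (simp add: T0)
  then have "Z4 = 0" by (rule cancel3)
  hence "Z = 0" unfolding Z4_def using cancel2 by blast
  thus ?thesis unfolding Z_def by simp
qed

lemma cross:
  assumes ee: "mult e e = e" and ff: "mult f f = f" and ef: "mult e f = 0" and fe: "mult f e = 0"
  shows "mult e (mult f x) = 0"
proof -
  have k1: "mult (mult e x) f = mult f (mult e x)" using cent[OF ff] by simp
  have k2: "mult (mult f x) e = mult e (mult f x)" using cent[OF ee] by simp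
  define Z where "Z = mult e (mult f x)"
  define Z4 where "Z4 = (Z + Z) + (Z + Z)"
  have "Z4 + Z4 + Z4 = - T e f x - T e f x - T e f x + T x e f + T f e x"
    unfolding Z4_def Z_def T_def Let_def by (simp only: bil ee ff ef fe k1 k2) simp
  hence "Z4 + Z4 + Z4 = 0" by (simp add: T0)
  then have "Z4 = 0" by (rule cancel3)
  hence "Z = 0" unfolding Z4_def using cancel2 by blast
  thus ?thesis unfolding Z_def by simp
qed

lemma ps1: "x \<in> peirce_space scale mult e 1 \<longleftrightarrow> mult e x = x \<and> mult x e = x"
proof -
  interpret vector_space scale by (rule vs)
  show ?thesis unfolding peirce_space_def by simp
qed

lemma ps0: "x \<in> peirce_space scale mult e 0 \<longleftrightarrow> mult e x = 0 \<and> mult x e = 0"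
proof -
  interpret vector_space scale by (rule vs)
  show ?thesis unfolding peirce_space_def by simp
qed

lemma ps_sub: "module.subspace scale (peirce_space scale mult e i)"
proof -
  interpret vector_space scale by (rule vs)
  show ?thesis
  proof (rule subspaceI)
    show "0 \<in> peirce_space scale mult e i" unfolding peirce_space_def by simp
  next
    fix x y assume "x \<in> peirce_space scale mult e i" "y \<in> peirce_space scale mult e i"
    then show "x + y \<in> peirce_space scale mult e i"
      unfolding peirce_space_def by (simp add: bil scale_right_distrib)
  next
    fix c x assume "x \<in> peirce_space scale mult e i"
    then show "scale c x \<in> peirce_space scale mult e i"
      unfolding peirce_space_def by (simp add: lsc rsc scale_left_commute)
  qed
qed

lemma main_loc:
  assumes e1_idem: "mult e1 e1 = e1"
    and e2_idem: "mult e2 e2 = e2"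
    and orth12: "mult e1 e2 = 0" and orth21: "mult e2 e1 = 0"
  shows "subalgebra scale mult (peirce_space scale mult e1 0 \<inter> peirce_space scale mult e2 0)
       \<and> subalgebra scale mult (peirce_space scale mult e1 1)
       \<and> subalgebra scale mult (peirce_space scale mult e2 1)
       \<and> direct_sum3 (peirce_space scale mult e1 0 \<inter> peirce_space scale mult e2 0)
                     (peirce_space scale mult e1 1) (peirce_space scale mult e2 1)"
proof -
  interpret vector_space scale by (rule vs)
  have s1: "subalgebra scale mult (peirce_space scale mult e 1)" if ee: "mult e e = e" for e
    unfolding subalgebra_def
  proof (intro conjI ballI)
    show "subspace (peirce_space scale mult e 1)" by (rule ps_sub)
  next
    fix x y assume "x \<in> peirce_space scale mult e 1" "y \<in> peirce_space scale mult e 1"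
    then show "mult x y \<in> peirce_space scale mult e 1"
      unfolding ps1 using sub1[OF ee] cent[OF ee] by metis
  qed
  have s0: "subalgebra scale mult (peirce_space scale mult e1 0 \<inter> peirce_space scale mult e2 0)"
    unfolding subalgebra_def
  proof (intro conjI ballI)
    show "subspace (peirce_space scale mult e1 0 \<inter> peirce_space scale mult e2 0)"
      by (intro subspace_inter ps_sub)
  next
    fix x y assume "x \<in> peirce_space scale mult e1 0 \<inter> peirce_space scale mult e2 0"
      "y \<in> peirce_space scale mult e1 0 \<inter> peirce_space scale mult e2 0"
    then show "mult x y \<in> peirce_space scale mult e1 0 \<inter> peirce_space scale mult e2 0"
      unfolding Int_iff ps0 using sub0[OF e1_idem] sub0[OF e2_idem] cent[OF e1_idem] cent[OF e2_idem]
      by metis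
  qed
  have ds: "direct_sum3 (peirce_space scale mult e1 0 \<inter> peirce_space scale mult e2 0)
                     (peirce_space scale mult e1 1) (peirce_space scale mult e2 1)"
    unfolding direct_sum3_def
  proof
    fix x
    let ?A = "peirce_space scale mult e1 0 \<inter> peirce_space scale mult e2 0"
    let ?B = "peirce_space scale mult e1 1"
    let ?C = "peirce_space scale mult e2 1"
    have x12: "mult e1 (mult e2 x) = 0" using cross[OF e1_idem e2_idem orth12 orth21] .
    have x21: "mult e2 (mult e1 x) = 0" using cross[OF e2_idem e1_idem orth21 orth12] .
    have wa: "x - mult e1 x - mult e2 x \<in> ?A"
      unfolding Int_iff ps0 using x12 x21 idem2[OF e1_idem] idem2[OF e2_idem]
        cent[OF e1_idem] cent[OF e2_idem] by (simp add: bil)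
    have wb: "mult e1 x \<in> ?B" unfolding ps1 using idem2[OF e1_idem] cent[OF e1_idem] by metis
    have wc: "mult e2 x \<in> ?C" unfolding ps1 using idem2[OF e2_idem] cent[OF e2_idem] by metis
    have uniq: "a = x - mult e1 x - mult e2 x \<and> b = mult e1 x \<and> c = mult e2 x"
      if "a \<in> ?A" "b \<in> ?B" "c \<in> ?C" "x = a + b + c" for a b c
    proof -
      from that have a: "mult e1 a = 0" "mult e2 a = 0" and b: "mult e1 b = b" and c: "mult e2 c = c"
        unfolding Int_iff ps0 ps1 by auto
      have bc: "mult e2 b = 0" using cross[OF e2_idem e1_idem orth21 orth12, of b] b by simp
      have cb: "mult e1 c = 0" using cross[OF e1_idem e2_idem orth12 orth21, of c] c by simp
      have "mult e1 x = b" using that(4) a b cb by (simp add: bil)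
      moreover have "mult e2 x = c" using that(4) a c bc by (simp add: bil)
      ultimately show ?thesis using that(4) by (simp add: algebra_simps)
    qed
    show "\<exists>!(a, b, c). a \<in> ?A \<and> b \<in> ?B \<and> c \<in> ?C \<and> x = a + b + c"
    proof (rule ex1I[of _ "(x - mult e1 x - mult e2 x, mult e1 x, mult e2 x)"])
      show "case (x - mult e1 x - mult e2 x, mult e1 x, mult e2 x) of (a, b, c) \<Rightarrow>
          a \<in> ?A \<and> b \<in> ?B \<and> c \<in> ?C \<and> x = a + b + c"
        using wa wb wc by simp
    next
      fix t assume "case t of (a, b, c) \<Rightarrow> a \<in> ?A \<and> b \<in> ?B \<and> c \<in> ?C \<and> x = a + b + c"
      then show "t = (x - mult e1 x - mult e2 x, mult e1 x, mult e2 x)"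
        using uniq by (cases t) auto
    qed
  qed
  show ?thesis using s0 s1[OF e1_idem] s1[OF e2_idem] ds by blast
qed

end

theorem mainTheorem7:
  fixes scale :: "'k::field \<Rightarrow> 'v::ab_group_add \<Rightarrow> 'v"
    and mult :: "'v \<Rightarrow> 'v \<Rightarrow> 'v"
    and e1 e2 :: 'v
  assumes char2: "(2::'k) \<noteq> 0" and char3: "(3::'k) \<noteq> 0"
    and adm: "admissible_poisson scale mult"
    and e1_idem: "mult e1 e1 = e1" and e1_nz: "e1 \<noteq> 0"
    and e2_idem: "mult e2 e2 = e2" and e2_nz: "e2 \<noteq> 0"
    and orth12: "mult e1 e2 = 0" and orth21: "mult e2 e1 = 0"
  shows "subalgebra scale mult (peirce_space scale mult e1 0 \<inter> peirce_space scale mult e2 0)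
       \<and> subalgebra scale mult (peirce_space scale mult e1 1)
       \<and> subalgebra scale mult (peirce_space scale mult e2 1)
       \<and> direct_sum3 (peirce_space scale mult e1 0 \<inter> peirce_space scale mult e2 0)
                     (peirce_space scale mult e1 1) (peirce_space scale mult e2 1)"
proof -
  interpret apa scale mult using adm char2 char3 by unfold_locales
  show ?thesis using main_loc[OF e1_idem e2_idem orth12 orth21] .
qed

end
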